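(* Let $N$ be an NFA, let $L_0$ be a forward-admissible initial partition of its vertex set $V$, and let $L$ be the partition output by the forward refinement algorithm started from $L_0$. For a finite sequence $\tau$ over $A\cup\{\varepsilon\}$ let $R(\tau)$ be the set of vertices reachable on $\tau$ from the starting vertex $v_s$. Then for every such $\tau$ and every $Z\in L$, either $Z\subseteq R(\tau)$ or $Z\cap R(\tau)=\emptyset$.
   Context: An NFA $N$ over a finite alphabet $A$ consists of a finite vertex set $V$, a starting vertex $v_s\in V$, accepting action sets for the vertices, and a set of labeled edges $v\xrightarrow{\lambda}w$ with $v,w\in V$ and $\lambda\in A\cup\{\varepsilon\}$. For a vertex $u$ and a finite sequence $\tau=\tau_1\cdots\tau_r$ ($r\ge0$) with $\tau_i\in A\cup\{\varepsilon\}$, a vertex $w$ is reachable from $u$ on $\tau$ if there are vertices $u=v_1,\dots,v_{r+1}=w$ with an edge $v_i\xrightarrow{\tau_i}v_{i+1}$ for each $i$. A partition $L_0$ of $V$ is a forward-admissible initial partition if $\{v_s\}\in L_0$. Refining a partition $P$ of $V$ by a subset $Y\subseteq V$ means replacing $P$ by the nonempty sets among $\{B\cap Y, B\setminus Y : B\in P\}$. Forward refinement algorithm: given $L_i$, for each $Z\in L_i$ and each $\sigma\in A\cup\{\varepsilon\}$ let $Z[\sigma]=\{z\in V: z'\xrightarrow{\sigma}z\text{ for some }z'\in Z\}$; $L_{i+1}$ is obtained from $L_i$ by refining successively by all these sets $Z[\sigma]$. Repeat until $L_{i+1}=L_i$ and output this converged partition $L$. *)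

theory Defs
  imports Main "HOL-Library.Disjoint_Sets"
begin

text \<open>Labels: \<open>Some a\<close> for a letter \<open>a \<in> A\<close>, \<open>None\<close> for epsilon. Accepting action sets play no role
  in the statement and are omitted.\<close>

definition labels :: "'a set \<Rightarrow> 'a option set" where
  "labels A = Some ` A \<union> {None}"

definition is_NFA :: "'a set \<Rightarrow> 'v set \<Rightarrow> 'v \<Rightarrow> ('v \<times> 'a option \<times> 'v) set \<Rightarrow> bool" where
  "is_NFA A V vs E \<longleftrightarrow> finite A \<and> finite V \<and> vs \<in> V \<and>
     (\<forall>(v, l, w) \<in> E. v \<in> V \<and> l \<in> labels A \<and> w \<in> V)"

definition reachable_on :: "('v \<times> 'a option \<times> 'v) set \<Rightarrow> 'v \<Rightarrow> 'a option list \<Rightarrow> 'v \<Rightarrow> bool" where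
  "reachable_on E u \<tau> w \<longleftrightarrow>
     (\<exists>vl. length vl = length \<tau> + 1 \<and> vl ! 0 = u \<and> vl ! length \<tau> = w \<and>
        (\<forall>i < length \<tau>. (vl ! i, \<tau> ! i, vl ! Suc i) \<in> E))"

definition reach_set :: "'v set \<Rightarrow> ('v \<times> 'a option \<times> 'v) set \<Rightarrow> 'v \<Rightarrow> 'a option list \<Rightarrow> 'v set" where
  "reach_set V E vs \<tau> = {w \<in> V. reachable_on E vs \<tau> w}"

definition forward_admissible :: "'v set \<Rightarrow> 'v \<Rightarrow> 'v set set \<Rightarrow> bool" where
  "forward_admissible V vs L0 \<longleftrightarrow> partition_on V L0 \<and> {vs} \<in> L0"

definition refine :: "'v set set \<Rightarrow> 'v set \<Rightarrow> 'v set set" where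
  "refine P Y = {C. C \<noteq> {} \<and> (\<exists>B \<in> P. C = B \<inter> Y \<or> C = B - Y)}"

definition succ_set :: "('v \<times> 'a option \<times> 'v) set \<Rightarrow> 'v set \<Rightarrow> 'a option \<Rightarrow> 'v set" where
  "succ_set E Z \<sigma> = {z. \<exists>z' \<in> Z. (z', \<sigma>, z) \<in> E}"

definition fwd_step :: "'a set \<Rightarrow> ('v \<times> 'a option \<times> 'v) set \<Rightarrow> 'v set set \<Rightarrow> 'v set set \<Rightarrow> bool" where
  "fwd_step A E L L' \<longleftrightarrow>
     (\<exists>ys. set ys = {succ_set E Z \<sigma> | Z \<sigma>. Z \<in> L \<and> \<sigma> \<in> labels A} \<and> L' = foldl refine L ys)"

definition fwd_output :: "'a set \<Rightarrow> ('v \<times> 'a option \<times> 'v) set \<Rightarrow> 'v set set \<Rightarrow> 'v set set \<Rightarrow> bool" where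
  "fwd_output A E L0 L \<longleftrightarrow>
     (\<exists>Ls n. Ls 0 = L0 \<and> (\<forall>i \<le> n. fwd_step A E (Ls i) (Ls (Suc i))) \<and>
        (\<forall>i < n. Ls (Suc i) \<noteq> Ls i) \<and> Ls (Suc n) = Ls n \<and> L = Ls n)"

end

theory Submission
  imports Defs
begin

lemma refine_union: "\<Union>(refine P Y) = \<Union>P"
proof
  show "\<Union>(refine P Y) \<subseteq> \<Union>P" unfolding refine_def by auto
  show "\<Union>P \<subseteq> \<Union>(refine P Y)"
  proof
    fix x assume "x \<in> \<Union>P"
    then obtain B where B: "B \<in> P" "x \<in> B" by auto
    show "x \<in> \<Union>(refine P Y)"
    proof (cases "x \<in> Y")
      case True
      then have "B \<inter> Y \<in> refine P Y" using B unfolding refine_def by auto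
      then show ?thesis using True B by auto
    next
      case False
      then have "B - Y \<in> refine P Y" using B unfolding refine_def by auto
      then show ?thesis using False B by auto
    qed
  qed
qed
lemma foldl_union: "\<Union>(foldl refine P ys) = \<Union>P"
proof (induction ys arbitrary: P)
  case Nil then show ?case by simp
next
  case (Cons y ys) then show ?case using refine_union[of P y] by simp
qed

lemma refine_sub: "C \<in> refine P Y \<Longrightarrow> \<exists>B\<in>P. C \<subseteq> B"
  unfolding refine_def by auto
lemma refine_split: "C \<in> refine P Y \<Longrightarrow> C \<subseteq> Y \<or> C \<inter> Y = {}"
  unfolding refine_def by auto
lemma foldl_sub: "C \<in> foldl refine P ys \<Longrightarrow> \<exists>B\<in>P. C \<subseteq> B"
proof (induction ys arbitrary: P)
  case Nil then show ?case by auto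
next
  case (Cons y ys)
  from Cons.IH[of "refine P y"] Cons.prems obtain B where "B \<in> refine P y" "C \<subseteq> B" by auto
  then obtain B' where "B' \<in> P" "B \<subseteq> B'" using refine_sub by metis
  then show ?case using \<open>C \<subseteq> B\<close> by auto
qed

lemma foldl_split: "C \<in> foldl refine P ys \<Longrightarrow> Y \<in> set ys \<Longrightarrow> C \<subseteq> Y \<or> C \<inter> Y = {}"
proof (induction ys arbitrary: P)
  case Nil then show ?case by auto
next
  case (Cons y ys)
  show ?case
  proof (cases "Y \<in> set ys")
    case True then show ?thesis using Cons.IH[of "refine P y"] Cons.prems by auto
  next
    case False
    then have "Y = y" using Cons.prems by auto
    from foldl_sub[of C "refine P y" ys] Cons.prems obtain B where "B \<in> refine P y" "C \<subseteq> B" by auto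
    then have "B \<subseteq> Y \<or> B \<inter> Y = {}" using refine_split \<open>Y = y\<close> by metis
    then show ?thesis using \<open>C \<subseteq> B\<close> by auto
  qed
qed
lemma reach_nil: "reachable_on E u [] w \<longleftrightarrow> w = u"
  unfolding reachable_on_def
  by (auto intro: exI[of _ "[u]"])

lemma reach_snoc: "reachable_on E u (\<tau> @ [\<sigma>]) w \<longleftrightarrow>
   (\<exists>w'. reachable_on E u \<tau> w' \<and> (w', \<sigma>, w) \<in> E)"
proof
  assume "reachable_on E u (\<tau> @ [\<sigma>]) w"
  then obtain vl where vl: "length vl = length \<tau> + 2" "vl ! 0 = u" "vl ! Suc (length \<tau>) = w"
    "\<forall>i < Suc (length \<tau>). (vl ! i, (\<tau>@[\<sigma>]) ! i, vl ! Suc i) \<in> E"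
    unfolding reachable_on_def by auto
  have "reachable_on E u \<tau> (vl ! length \<tau>)"
    unfolding reachable_on_def
  proof (intro exI[of _ "take (length \<tau> + 1) vl"] conjI allI impI)
    fix i assume "i < length \<tau>"
    then show "(take (length \<tau> + 1) vl ! i, \<tau> ! i, take (length \<tau> + 1) vl ! Suc i) \<in> E"
      using vl(4)[rule_format, of i] by (auto simp: nth_append)
  qed (use vl in auto)
  moreover have "(vl ! length \<tau>, \<sigma>, w) \<in> E" using vl(3) vl(4)[rule_format, of "length \<tau>"] by auto
  ultimately show "\<exists>w'. reachable_on E u \<tau> w' \<and> (w', \<sigma>, w) \<in> E" by blast
next
  assume "\<exists>w'. reachable_on E u \<tau> w' \<and> (w', \<sigma>, w) \<in> E"
  then obtain w' vl where vl: "length vl = length \<tau> + 1" "vl ! 0 = u" "vl ! length \<tau> = w'"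
    "\<forall>i < length \<tau>. (vl ! i, \<tau> ! i, vl ! Suc i) \<in> E" and e: "(w', \<sigma>, w) \<in> E"
    unfolding reachable_on_def by auto
  show "reachable_on E u (\<tau> @ [\<sigma>]) w"
    unfolding reachable_on_def
  proof (intro exI[of _ "vl @ [w]"] conjI allI impI)
    fix i assume i: "i < length (\<tau> @ [\<sigma>])"
    show "((vl @ [w]) ! i, (\<tau> @ [\<sigma>]) ! i, (vl @ [w]) ! Suc i) \<in> E"
    proof (cases "i < length \<tau>")
      case True then show ?thesis using vl by (auto simp: nth_append)
    next
      case False then have "i = length \<tau>" using i by auto
      then show ?thesis using vl e by (auto simp: nth_append)
    qed
  qed (use vl in \<open>auto simp: nth_append\<close>)
qed

theorem mainTheorem6:
  fixes A :: "'a set" and V :: "'v set" and vs :: 'v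
    and E :: "('v \<times> 'a option \<times> 'v) set"
  assumes "is_NFA A V vs E"
    and "forward_admissible V vs L0"
    and "fwd_output A E L0 L"
    and "set \<tau> \<subseteq> labels A"
    and "Z \<in> L"
  shows "Z \<subseteq> reach_set V E vs \<tau> \<or> Z \<inter> reach_set V E vs \<tau> = {}"
proof -
  from assms(3)[unfolded fwd_output_def] obtain Ls n where Ls: "Ls 0 = L0" "\<forall>i \<le> n. fwd_step A E (Ls i) (Ls (Suc i))"
    "Ls (Suc n) = Ls n" "L = Ls n"
    by (elim exE conjE) simp
  have inv: "\<Union>(Ls i) = \<Union>L0 \<and> (\<forall>C\<in>Ls i. \<exists>B\<in>L0. C \<subseteq> B)" if "i \<le> n" for i
    using that
  proof (induction i)
    case 0 then show ?case using Ls by auto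
  next
    case (Suc i)
    then have IH: "\<Union>(Ls i) = \<Union>L0" "\<forall>C\<in>Ls i. \<exists>B\<in>L0. C \<subseteq> B" by auto
    have "i \<le> n" using Suc.prems by simp
    then obtain ys where "Ls (Suc i) = foldl refine (Ls i) ys"
      using Ls(2) unfolding fwd_step_def by blast
    have u: "\<Union>(Ls (Suc i)) = \<Union>L0" unfolding \<open>Ls (Suc i) = foldl refine (Ls i) ys\<close> foldl_union IH(1) ..
    have "\<forall>C\<in>Ls (Suc i). \<exists>B\<in>L0. C \<subseteq> B"
    proof
      fix C assume "C \<in> Ls (Suc i)"
      then obtain B where B: "B \<in> Ls i" "C \<subseteq> B"
        using foldl_sub \<open>Ls (Suc i) = foldl refine (Ls i) ys\<close> by metis
      then obtain B' where "B' \<in> L0" "B \<subseteq> B'" using IH(2) by metis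
      then show "\<exists>B\<in>L0. C \<subseteq> B" using B(2) by auto
    qed
    then show ?case using u by simp
  qed
  have part: "partition_on V L0" "{vs} \<in> L0" using assms(2) unfolding forward_admissible_def by auto
  have invn: "\<Union>(Ls n) = \<Union>L0" "\<forall>C\<in>Ls n. \<exists>B\<in>L0. C \<subseteq> B" using inv[of n] by simp_all
  have "\<Union>L0 = V" using part(1) by (rule partition_onD1[symmetric])
  then have UL: "\<Union>L = V" using invn(1) Ls(4) by simp
  have subL0: "\<forall>C\<in>L. \<exists>B\<in>L0. C \<subseteq> B" using invn(2) Ls(4) by simp
  have fL: "fwd_step A E (Ls n) (Ls (Suc n))" using Ls(2) by simp
  then have "fwd_step A E L L" using Ls(3) Ls(4) by simp
  then obtain ys where ys: "set ys = {succ_set E Z \<sigma> | Z \<sigma>. Z \<in> L \<and> \<sigma> \<in> labels A}"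
    "L = foldl refine L ys"
    unfolding fwd_step_def by blast
  have split: "C \<subseteq> succ_set E Z' \<sigma> \<or> C \<inter> succ_set E Z' \<sigma> = {}"
    if "C \<in> L" "Z' \<in> L" "\<sigma> \<in> labels A" for C Z' \<sigma>
  proof -
    have m: "succ_set E Z' \<sigma> \<in> set ys" unfolding ys(1) using that(2,3) by blast
    have "C \<in> foldl refine L ys" using that(1) ys(2) by (rule back_subst)
    from foldl_split[OF this m] show ?thesis .
  qed
  have vsV: "vs \<in> V" and Eok: "\<forall>(v, l, w) \<in> E. v \<in> V \<and> l \<in> labels A \<and> w \<in> V"
    using assms(1) unfolding is_NFA_def by auto
  have "\<forall>Z\<in>L. Z \<subseteq> reach_set V E vs \<tau> \<or> Z \<inter> reach_set V E vs \<tau> = {}"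
    using assms(4)
  proof (induction \<tau> rule: rev_induct)
    case Nil
    have R: "reach_set V E vs [] = {vs}" using vsV by (auto simp: reach_set_def reach_nil)
    show ?case
    proof
      fix C assume C: "C \<in> L"
      show "C \<subseteq> reach_set V E vs [] \<or> C \<inter> reach_set V E vs [] = {}"
      proof (cases "vs \<in> C")
        case True
        obtain B where B: "B \<in> L0" "C \<subseteq> B" using subL0 C by auto
        then have "vs \<in> B" using True by auto
        show ?thesis
        proof (cases "B = {vs}")
          case True then show ?thesis using B R by auto
        next
          case False
          then have "B \<inter> {vs} = {}" using disjointD[OF partition_onD2[OF part(1)] B(1) part(2)] by simp
          then show ?thesis using \<open>vs \<in> B\<close> by auto
        qed
      next
        case False then show ?thesis using R by auto
      qed
    qed
  next
    case (snoc \<sigma> \<tau>)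
    then have IH: "\<forall>Z\<in>L. Z \<subseteq> reach_set V E vs \<tau> \<or> Z \<inter> reach_set V E vs \<tau> = {}"
      and sig: "\<sigma> \<in> labels A" by auto
    let ?R = "reach_set V E vs \<tau>"
    let ?S = "{Z'\<in>L. Z' \<subseteq> ?R}"
    have RS: "?R = \<Union>?S"
    proof
      show "?R \<subseteq> \<Union>?S"
      proof
        fix x assume x: "x \<in> ?R"
        then have "x \<in> V" by (auto simp: reach_set_def)
        then obtain Z' where "Z' \<in> L" "x \<in> Z'" using UL by auto
        then show "x \<in> \<Union>?S" using IH x by blast
      qed
    qed auto
    have R2: "reach_set V E vs (\<tau> @ [\<sigma>]) = (\<Union>Z'\<in>?S. succ_set E Z' \<sigma>)"
    proof -
      have "reach_set V E vs (\<tau> @ [\<sigma>]) = succ_set E ?R \<sigma>"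
        using Eok by (auto simp: reach_set_def reach_snoc succ_set_def)
      also have "\<dots> = (\<Union>Z'\<in>?S. succ_set E Z' \<sigma>)"
        by (subst RS) (auto simp: succ_set_def)
      finally show ?thesis .
    qed
    show ?case
    proof
      fix C assume C: "C \<in> L"
      show "C \<subseteq> reach_set V E vs (\<tau> @ [\<sigma>]) \<or> C \<inter> reach_set V E vs (\<tau> @ [\<sigma>]) = {}"
      proof (cases "\<exists>Z'\<in>?S. C \<subseteq> succ_set E Z' \<sigma>")
        case True then show ?thesis unfolding R2 by blast
      next
        case False
        then have "\<forall>Z'\<in>?S. C \<inter> succ_set E Z' \<sigma> = {}" using split[OF C _ sig] by blast
        then show ?thesis unfolding R2 by blast
      qed
    qed
  qed
  then show ?thesis using assms(5) by auto
qed

end
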